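(* Let $r\ge 3$ and $t\ge 1$ be integers, let $s=\lfloor (t-1)/2\rfloor$, and let $\mathcal{C}$ be an $(n,k,r,t)_{\mathrm{seq}}$ code over a finite field $\mathbb{F}_q$. Then $$\frac{k}{n}\le \frac{r^{s+1}}{r^{s+1}+2\sum_{i=0}^{s}r^i}\quad\text{if $t$ is even},\qquad \frac{k}{n}\le \frac{r^{s+1}}{r^{s+1}+2\sum_{i=1}^{s}r^i+1}\quad\text{if $t$ is odd}.$$
   Context: Sequential-recovery LRC: Let $\mathbb{F}_q$ be a finite field and $n,k,r,t$ positive integers. An $(n,k,r,t)_{\mathrm{seq}}$ code is an $[n,k]$ linear code $\mathcal{C}\subseteq\mathbb{F}_q^n$ (length $n$, dimension $k$) with the following property: for every set $E\subseteq[n]$ with $1\le |E|=u\le t$ there is an ordering $\ell_1,\dots,\ell_u$ of the elements of $E$ and, for each $j\in[u]$, a set $R_j\subseteq[n]$ with $|R_j|\le r$ and $R_j\cap\{\ell_j,\ell_{j+1},\dots,\ell_u\}=\emptyset$, together with coefficients $a_{j,i}\in\mathbb{F}_q$ ($i\in R_j$), such that $c_{\ell_j}=\sum_{i\in R_j}a_{j,i}c_i$ for every codeword $c=(c_1,\dots,c_n)\in\mathcal{C}$. *)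

theory Defs
  imports "HOL-Analysis.Analysis"
begin

definition seq_recoverable :: "('a::field ^ 'n) set \<Rightarrow> nat \<Rightarrow> nat \<Rightarrow> bool" where
  "seq_recoverable C r t \<longleftrightarrow>
     (\<forall>E::'n set. E \<noteq> {} \<and> card E \<le> t \<longrightarrow>
        (\<exists>l. distinct l \<and> set l = E \<and>
           (\<forall>j<length l. \<exists>(R::'n set) (a::'n \<Rightarrow> 'a).
              card R \<le> r \<and> R \<inter> set (drop j l) = {} \<and>
              (\<forall>c\<in>C. c $ (l ! j) = (\<Sum>i\<in>R. a i * c $ i)))))"

definition seq_LRC :: "('a::{field,finite} ^ 'n) set \<Rightarrow> nat \<Rightarrow> nat \<Rightarrow> nat \<Rightarrow> nat \<Rightarrow> bool" where
  "seq_LRC C n k r t \<longleftrightarrow>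
     vec.subspace C \<and> CARD('n) = n \<and> vec.dim C = k \<and> seq_recoverable C r t"

end

theory Submission
  imports Defs
begin

definition dotp :: "'a::field ^ 'n \<Rightarrow> 'a ^ 'n \<Rightarrow> 'a" where
  "dotp g x = (\<Sum>j\<in>UNIV. g $ j * x $ j)"

lemma dotp_diff_right: "dotp g (x - c *s y) = dotp g x - c * dotp g y"
  by (simp add: dotp_def algebra_simps sum_subtractf sum_distrib_left)
lemma dotp_diff_left: "dotp (h - c *s g) y = dotp h y - c * dotp g y"
  by (simp add: dotp_def algebra_simps sum_subtractf sum_distrib_left)
lemma dotp_scale_right: "dotp g (c *s y) = c * dotp g y"
  by (simp add: dotp_def algebra_simps sum_distrib_left)
lemma dotp_axis: "dotp h (axis j 1) = h $ j"
  by (simp add: dotp_def axis_def if_distrib cong: if_cong)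

lemma dotp_span:
  assumes "\<forall>g\<in>S. dotp g x = 0" "g \<in> vec.span S"
  shows "dotp g x = 0"
proof -
  have "vec.subspace {g. dotp g x = 0}"
    unfolding vec.subspace_def
    by (simp add: dotp_def algebra_simps sum.distrib flip: sum_distrib_left)
  then show ?thesis using vec.span_minimal[of S "{g. dotp g x = 0}"] assms by auto
qed

lemma dual_exists:
  fixes S :: "('a::field ^ 'n) set"
  assumes "finite S"
  shows "h \<notin> vec.span S \<Longrightarrow> \<exists>x. (\<forall>g\<in>S. dotp g x = 0) \<and> dotp h x \<noteq> 0"
  using assms
proof (induction S arbitrary: h rule: finite_induct)
  case empty
  then have "h \<noteq> 0" by (simp add: vec.span_empty)
  then obtain j where "h $ j \<noteq> 0" by (metis vec_eq_iff zero_index)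
  then show ?case by (intro exI[of _ "axis j 1"]) (simp add: dotp_axis)
next
  case (insert g S)
  have hS: "h \<notin> vec.span S" using insert.prems vec.span_mono[of S "insert g S"] by auto
  show ?case
  proof (cases "g \<in> vec.span S")
    case True
    obtain x where x: "\<forall>g\<in>S. dotp g x = 0" "dotp h x \<noteq> 0" using insert.IH[OF hS] by blast
    have "dotp g x = 0" using dotp_span[OF x(1) True] .
    then show ?thesis using x by auto
  next
    case False
    obtain xg where xg: "\<forall>g\<in>S. dotp g xg = 0" "dotp g xg \<noteq> 0" using insert.IH[OF False] by blast
    define x1 where "x1 = (1 / dotp g xg) *s xg"
    have x1: "\<forall>g\<in>S. dotp g x1 = 0" "dotp g x1 = 1"
      using xg by (auto simp: x1_def dotp_scale_right)
    define c where "c = dotp h x1"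
    have "h - c *s g \<notin> vec.span S"
    proof
      assume "h - c *s g \<in> vec.span S"
      then have "h - c *s g \<in> vec.span (insert g S)" using vec.span_mono[of S "insert g S"] by auto
      moreover have "c *s g \<in> vec.span (insert g S)" by (simp add: vec.span_base vec.span_scale)
      ultimately have "(h - c *s g) + c *s g \<in> vec.span (insert g S)" by (rule vec.span_add)
      then show False using insert.prems by simp
    qed
    then obtain y where y: "\<forall>g\<in>S. dotp g y = 0" "dotp (h - c *s g) y \<noteq> 0" using insert.IH by blast
    define x where "x = y - dotp g y *s x1"
    have "\<forall>g'\<in>insert g S. dotp g' x = 0"
      using x1 y(1) by (auto simp: x_def dotp_diff_right)
    moreover have "dotp h x \<noteq> 0"
      using y(2) by (simp add: x_def dotp_diff_right dotp_diff_left c_def algebra_simps)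
    ultimately show ?thesis by blast
  qed
qed

definition Kset :: "('a::field ^ 'n) set \<Rightarrow> ('a ^ 'n) set" where
  "Kset S = {x. \<forall>g\<in>S. dotp g x = 0}"

lemma Kset_subspace: "vec.subspace (Kset S)"
  unfolding vec.subspace_def Kset_def
  by (simp add: dotp_def algebra_simps sum.distrib flip: sum_distrib_left)

lemma dim_Kset:
  fixes S :: "('a::field ^ 'n) set"
  assumes "vec.independent S"
  shows "vec.dim (Kset S) + card S \<le> CARD('n)"
proof -
  have fin: "finite S" using assms vec.finiteI_independent by blast
  show ?thesis using fin assms
  proof (induction S rule: finite_induct)
    case empty
    have "Kset ({}::('a ^ 'n) set) = UNIV" by (simp add: Kset_def)
    then show ?case by (metis vec_dim_card le_refl add_0_right card.empty)
  next
    case (insert g S)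
    have indS: "vec.independent S" and gS: "g \<notin> vec.span S"
      using insert.prems insert.hyps by (auto simp: vec.independent_insert)
    obtain x where x: "\<forall>g\<in>S. dotp g x = 0" "dotp g x \<noteq> 0" using dual_exists[OF insert.hyps(1) gS] by blast
    have "Kset (insert g S) \<subset> Kset S" using x by (auto simp: Kset_def)
    then have "vec.dim (Kset (insert g S)) < vec.dim (Kset S)"
      using vec.dim_psubset[of "Kset (insert g S)" "Kset S"]
      by (metis Kset_subspace vec.span_eq_iff)
    then show ?case using insert.IH[OF indS] insert.hyps by simp
  qed
qed


locale comb =
  fixes H :: "'r set" and A :: "'r \<Rightarrow> 'c::finite \<Rightarrow> 'a::field" and r t s :: nat
  assumes finH: "finite H"
  and rowwt: "h \<in> H \<Longrightarrow> card {j. A h j \<noteq> 0} \<le> r + 1"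
  and Q: "E \<noteq> {} \<Longrightarrow> card E \<le> t \<Longrightarrow> \<exists>\<mu>. card {j\<in>E. (\<Sum>h\<in>H. \<mu> h * A h j) \<noteq> 0} = 1"
  and r3: "r \<ge> 3" and t1: "t \<ge> 1" and ts1: "2 * s + 1 \<le> t" and ts2: "t \<le> 2 * s + 2"
begin

definition wv :: "('r \<Rightarrow> 'a) \<Rightarrow> 'c \<Rightarrow> 'a" where "wv \<mu> j = (\<Sum>h\<in>H. \<mu> h * A h j)"
definition cs :: "'c \<Rightarrow> 'r set" where "cs j = {h\<in>H. A h j \<noteq> 0}"
definition edge :: "'c \<Rightarrow> 'r \<Rightarrow> 'r \<Rightarrow> bool" where "edge j x y \<longleftrightarrow> cs j = {x,y} \<and> x \<noteq> y"
definition T0 :: "'r set" where "T0 = {h. \<exists>j. cs j = {h}}"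

lemma Q': "E \<noteq> {} \<Longrightarrow> card E \<le> t \<Longrightarrow> \<exists>\<mu> e. e \<in> E \<and> wv \<mu> e \<noteq> 0 \<and> (\<forall>j\<in>E - {e}. wv \<mu> j = 0)"
proof -
  assume "E \<noteq> {}" "card E \<le> t"
  from Q[OF this] obtain \<mu> where "card {j\<in>E. wv \<mu> j \<noteq> 0} = 1" by (auto simp: wv_def)
  then obtain e where "{j\<in>E. wv \<mu> j \<noteq> 0} = {e}" by (auto simp: card_1_singleton_iff)
  then show ?thesis by (intro exI[of _ \<mu>] exI[of _ e]) blast
qed

lemma cs_sub: "cs j \<subseteq> H" by (auto simp: cs_def)
lemma fin_cs: "finite (cs j)" using finH by (auto simp: cs_def)

lemma wv_cs: "wv \<mu> j = (\<Sum>h\<in>cs j. \<mu> h * A h j)"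
  unfolding wv_def cs_def using finH by (intro sum.mono_neutral_right) auto

lemma wv_zero: "(\<forall>h\<in>cs j. \<mu> h = 0) \<Longrightarrow> wv \<mu> j = 0"
  by (simp add: wv_cs)

lemma wv_1: "cs j = {x} \<Longrightarrow> wv \<mu> j = 0 \<longleftrightarrow> \<mu> x = 0"
  by (simp add: wv_cs) (metis (mono_tags, lifting) cs_def insertI1 mem_Collect_eq)

lemma edge_sym: "edge j x y \<Longrightarrow> edge j y x" by (auto simp: edge_def)

lemma wv_2: "edge j x y \<Longrightarrow> wv \<mu> j = 0 \<Longrightarrow> \<mu> x = 0 \<longleftrightarrow> \<mu> y = 0"
proof -
  assume e: "edge j x y" and w: "wv \<mu> j = 0"
  have ne: "A x j \<noteq> 0" "A y j \<noteq> 0" using e by (auto simp: edge_def cs_def)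
  have "wv \<mu> j = \<mu> x * A x j + \<mu> y * A y j" using e by (simp add: wv_cs edge_def)
  then show ?thesis using w ne by auto
qed

lemma wv_lin: "wv (\<lambda>h. \<mu>1 h - c * \<mu>2 h) j = wv \<mu>1 j - c * wv \<mu>2 j"
  by (simp add: wv_def algebra_simps sum_subtractf sum_distrib_left)

lemma edge_not1: "edge j x y \<Longrightarrow> cs j \<noteq> {z}" by (auto simp: edge_def)

fun reach :: "nat \<Rightarrow> 'r \<Rightarrow> bool" where
  "reach 0 x = (x \<in> T0)"
| "reach (Suc d) x = (reach d x \<or> (\<exists>y j. reach d y \<and> edge j x y))"

definition lv :: "'r \<Rightarrow> nat" where "lv x = (LEAST d. reach d x)"
definition lvd :: "'r \<Rightarrow> bool" where "lvd x = reach s x"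
definition par :: "'r \<Rightarrow> 'r" where
  "par x = (SOME y. \<exists>j. reach (lv x - 1) y \<and> lv y = lv x - 1 \<and> edge j x y)"
definition pe :: "'r \<Rightarrow> 'c" where "pe x = (SOME j. edge j x (par x))"
definition ah :: "'r \<Rightarrow> 'c" where "ah x = (SOME j. cs j = {x})"

fun anc :: "nat \<Rightarrow> 'r \<Rightarrow> 'r" where
  "anc 0 x = x"
| "anc (Suc i) x = anc i (par x)"

definition Seg :: "nat \<Rightarrow> 'r \<Rightarrow> 'c set" where "Seg i x = (\<lambda>q. pe (anc q x)) ` {..<i}"
definition root :: "'r \<Rightarrow> 'r" where "root x = anc (lv x) x"
definition P :: "'r \<Rightarrow> 'c set" where "P x = insert (ah (root x)) (Seg (lv x) x)"

lemma reach_mono: assumes "reach d x" "d \<le> d'" shows "reach d' x"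
  using assms(2,1) by (induction d' rule: dec_induct) auto

lemma reach_lv: "reach d x \<Longrightarrow> reach (lv x) x \<and> lv x \<le> d"
  unfolding lv_def by (metis LeastI Least_le)

lemma reach_edge: "edge j x y \<Longrightarrow> reach d y \<Longrightarrow> reach (Suc d) x" by auto

lemma lv_edge: "edge j x y \<Longrightarrow> reach d y \<Longrightarrow> lv x \<le> Suc (lv y)"
  by (metis reach_lv reach_edge)

lemma T0_lv: assumes "x \<in> T0" shows "reach 0 x \<and> lv x = 0"
proof -
  have "reach 0 x" using assms by simp
  then show ?thesis using reach_lv[of 0 x] by simp
qed

lemma lv0: assumes "reach d x" "lv x = 0" shows "x \<in> T0"
proof -
  have "reach (lv x) x" using reach_lv[OF assms(1)] by blast
  then show ?thesis using assms(2) by simp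
qed

lemma ah_prop: assumes "x \<in> T0" shows "cs (ah x) = {x}"
proof -
  have "\<exists>j. cs j = {x}" using assms by (simp add: T0_def)
  then show ?thesis unfolding ah_def by (rule someI_ex)
qed

lemma lv_Suc: "reach d x \<Longrightarrow> lv x = Suc i \<Longrightarrow> \<exists>y j. reach i y \<and> lv y = i \<and> edge j x y"
proof -
  assume "reach d x" "lv x = Suc i"
  then have r: "reach (Suc i) x" using reach_lv by metis
  have nr: "\<not> reach i x" using \<open>lv x = Suc i\<close> reach_lv by fastforce
  then obtain y j where y: "reach i y" "edge j x y" using r by auto
  have "lv y \<le> i" using y reach_lv by blast
  moreover have "\<not> lv y < i"
  proof
    assume "lv y < i"
    then have "reach (Suc (lv y)) x" using y reach_lv reach_edge by blast
    then show False using nr reach_mono \<open>lv y < i\<close> by (metis Suc_leI)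
  qed
  ultimately show ?thesis using y by (intro exI[of _ y] exI[of _ j]) auto
qed

lemma par_prop: "lvd x \<Longrightarrow> 1 \<le> lv x \<Longrightarrow> lvd (par x) \<and> lv (par x) = lv x - 1 \<and> edge (pe x) x (par x)"
proof -
  assume a: "lvd x" "1 \<le> lv x"
  then have ls: "lv x \<le> s" using reach_lv lvd_def by blast
  obtain i where i: "lv x = Suc i" using a by (cases "lv x") auto
  have ex: "\<exists>y j. reach (lv x - 1) y \<and> lv y = lv x - 1 \<and> edge j x y"
    using lv_Suc[OF _ i] a i lvd_def by auto
  then have p: "\<exists>j. reach (lv x - 1) (par x) \<and> lv (par x) = lv x - 1 \<and> edge j x (par x)"
    unfolding par_def by (rule someI_ex)
  then have "edge (pe x) x (par x)" unfolding pe_def by (metis someI_ex)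
  moreover have "lvd (par x)" using p ls reach_mono lvd_def by (metis diff_le_self le_trans)
  ultimately show ?thesis using p by blast
qed

lemma lvd_H: "lvd x \<Longrightarrow> x \<in> H"
proof -
  have "reach d x \<Longrightarrow> x \<in> H" for d
  proof (induction d)
    case 0 then show ?case using cs_sub by (auto simp: T0_def)
  next
    case (Suc d)
    then show ?case using cs_sub by (auto simp: edge_def)
  qed
  then show "lvd x \<Longrightarrow> x \<in> H" by (auto simp: lvd_def)
qed

lemma anc_prop: "lvd x \<Longrightarrow> i \<le> lv x \<Longrightarrow> lvd (anc i x) \<and> lv (anc i x) = lv x - i"
proof (induction i arbitrary: x)
  case 0 then show ?case by simp
next
  case (Suc i)
  then have "lvd (par x)" "lv (par x) = lv x - 1" using par_prop by auto
  then show ?case using Suc.IH[of "par x"] Suc.prems by auto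
qed

lemma anc_add: "anc (i + j) x = anc j (anc i x)"
  by (induction i arbitrary: x) auto

lemma Seg_add: "Seg (i + j) x = Seg i x \<union> Seg j (anc i x)"
proof -
  have e: "{..<i+j} = {..<i} \<union> (\<lambda>q. i + q) ` {..<j}"
  proof (rule set_eqI)
    fix q
    show "q \<in> {..<i+j} \<longleftrightarrow> q \<in> {..<i} \<union> (\<lambda>q. i + q) ` {..<j}"
    proof
      assume "q \<in> {..<i+j}"
      then show "q \<in> {..<i} \<union> (\<lambda>q. i + q) ` {..<j}"
        by (cases "q < i") (auto intro!: image_eqI[of q _ "q - i"])
    qed auto
  qed
  have "Seg (i + j) x = (\<lambda>q. pe (anc q x)) ` {..<i} \<union> (\<lambda>q. pe (anc q x)) ` ((\<lambda>q. i + q) ` {..<j})"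
    unfolding Seg_def e image_Un ..
  also have "(\<lambda>q. pe (anc q x)) ` ((\<lambda>q. i + q) ` {..<j}) = Seg j (anc i x)"
    unfolding Seg_def image_image anc_add ..
  finally show ?thesis unfolding Seg_def .
qed

lemma Seg_Suc: "Seg (Suc i) x = insert (pe x) (Seg i (par x))"
  using Seg_add[of 1 i x] by (simp add: Seg_def lessThan_Suc)

lemma fin_Seg: "finite (Seg i x)" by (simp add: Seg_def)
lemma card_Seg: "card (Seg i x) \<le> i"
  unfolding Seg_def using card_image_le[of "{..<i}"] by auto

lemma pe_inj: "lvd u \<Longrightarrow> lvd v \<Longrightarrow> 1 \<le> lv u \<Longrightarrow> 1 \<le> lv v \<Longrightarrow> pe u = pe v \<Longrightarrow> u = v"
proof -
  assume a: "lvd u" "lvd v" "1 \<le> lv u" "1 \<le> lv v" "pe u = pe v"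
  have "edge (pe u) u (par u)" "edge (pe v) v (par v)" using par_prop a by blast+
  then have "cs (pe u) = {u, par u}" "cs (pe v) = {v, par v}" by (simp_all add: edge_def)
  moreover have "lv (par u) = lv u - 1" "lv (par v) = lv v - 1" using par_prop a by auto
  ultimately have c: "{u, par u} = {v, par v}" "lv (par u) = lv u - 1" "lv (par v) = lv v - 1"
    using a(5) by auto
  show "u = v"
  proof (rule ccontr)
    assume "u \<noteq> v"
    then have "u = par v" "v = par u" using c(1) by (auto simp: doubleton_eq_iff)
    then show False using c a(3,4) by simp
  qed
qed

lemma Seg_mem: "lvd x \<Longrightarrow> i \<le> lv x \<Longrightarrow> j \<in> Seg i x \<Longrightarrow>
   \<exists>q<i. j = pe (anc q x) \<and> lvd (anc q x) \<and> lv (anc q x) = lv x - q \<and> 1 \<le> lv (anc q x) \<and> edge j (anc q x) (par (anc q x))"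
proof -
  assume a: "lvd x" "i \<le> lv x" "j \<in> Seg i x"
  then obtain q where q: "q < i" "j = pe (anc q x)" by (auto simp: Seg_def)
  have "lvd (anc q x) \<and> lv (anc q x) = lv x - q" using anc_prop a q by auto
  moreover then have "1 \<le> lv (anc q x)" using q a by auto
  ultimately show ?thesis using q par_prop by blast
qed

lemma Seg_edge: "lvd x \<Longrightarrow> i \<le> lv x \<Longrightarrow> j \<in> Seg i x \<Longrightarrow> cs j \<noteq> {z}"
  using Seg_mem edge_not1 by blast

lemma root_prop: "lvd x \<Longrightarrow> root x \<in> T0 \<and> lvd (root x)"
  using anc_prop[of x "lv x"] lv0 unfolding root_def lvd_def by auto

lemma ah_notin_Seg: "lvd x \<Longrightarrow> i \<le> lv x \<Longrightarrow> ah (root x) \<notin> Seg i x"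
  using Seg_edge root_prop ah_prop by metis

lemma fin_P: "finite (P x)" by (simp add: P_def fin_Seg)
lemma card_P: "card (P x) \<le> lv x + 1"
proof -
  have "card (P x) \<le> Suc (card (Seg (lv x) x))" unfolding P_def by (simp add: card_insert_if fin_Seg)
  then show ?thesis using card_Seg[of "lv x" x] by simp
qed


lemma Up: "lvd x \<Longrightarrow> d \<le> lv x \<Longrightarrow> \<mu> (anc d x) = 0 \<Longrightarrow> (\<forall>j\<in>Seg d x. wv \<mu> j = 0) \<Longrightarrow> \<mu> x = 0"
proof (induction d arbitrary: x)
  case 0 then show ?case by simp
next
  case (Suc d)
  have p: "lvd (par x)" "lv (par x) = lv x - 1" "edge (pe x) x (par x)" using par_prop Suc.prems by auto
  have "\<mu> (par x) = 0" using Suc.IH[OF p(1)] Suc.prems p(2) by (simp add: Seg_Suc)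
  moreover have "wv \<mu> (pe x) = 0" using Suc.prems by (simp add: Seg_Suc)
  ultimately show ?case using wv_2[OF p(3)] by simp
qed

lemma Down: "lvd x \<Longrightarrow> d \<le> lv x \<Longrightarrow> \<mu> x = 0 \<Longrightarrow> (\<forall>j\<in>Seg d x. wv \<mu> j = 0) \<Longrightarrow> \<mu> (anc d x) = 0"
proof (induction d arbitrary: x)
  case 0 then show ?case by simp
next
  case (Suc d)
  have p: "lvd (par x)" "lv (par x) = lv x - 1" "edge (pe x) x (par x)" using par_prop Suc.prems by auto
  have "wv \<mu> (pe x) = 0" using Suc.prems by (simp add: Seg_Suc)
  then have "\<mu> (par x) = 0" using wv_2[OF p(3)] Suc.prems by simp
  then show ?case using Suc.IH[OF p(1)] Suc.prems p(2) by (simp add: Seg_Suc)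
qed

lemma pe_notin_Seg: "lvd x \<Longrightarrow> 1 \<le> lv x \<Longrightarrow> d \<le> lv x - 1 \<Longrightarrow> pe x \<notin> Seg d (par x)"
proof
  assume a: "lvd x" "1 \<le> lv x" "d \<le> lv x - 1" "pe x \<in> Seg d (par x)"
  have p: "lvd (par x)" "lv (par x) = lv x - 1" using par_prop a by auto
  obtain q where q: "q < d" "pe x = pe (anc q (par x))" "lvd (anc q (par x))"
      "lv (anc q (par x)) = lv (par x) - q" "1 \<le> lv (anc q (par x))"
    using Seg_mem[OF p(1) _ a(4)] a(3) p(2) by auto
  have "x = anc q (par x)" using pe_inj[OF a(1) q(3) a(2) q(5) q(2)] .
  then have "lv x = lv x - 1 - q" using q(4) p(2) by simp
  then show False using a(2) by simp
qed

lemma Mid: "lvd x \<Longrightarrow> d \<le> lv x \<Longrightarrow> \<mu> x = 0 \<Longrightarrow> \<mu> (anc d x) = 0 \<Longrightarrow> e \<in> Seg d x \<Longrightarrow>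
   (\<forall>j\<in>Seg d x - {e}. wv \<mu> j = 0) \<Longrightarrow> wv \<mu> e = 0"
proof (induction d arbitrary: x)
  case 0 then show ?case by (simp add: Seg_def)
next
  case (Suc d)
  have p: "lvd (par x)" "lv (par x) = lv x - 1" "edge (pe x) x (par x)" using par_prop Suc.prems by auto
  show ?case
  proof (cases "e = pe x")
    case True
    have ni: "pe x \<notin> Seg d (par x)" using pe_notin_Seg Suc.prems by auto
    have "\<mu> (par x) = 0"
      using Up[OF p(1), of d \<mu>] Suc.prems p(2) ni True by (auto simp: Seg_Suc)
    then show ?thesis using True p(3) Suc.prems(3) by (intro wv_zero) (auto simp: edge_def)
  next
    case False
    then have "wv \<mu> (pe x) = 0" using Suc.prems by (simp add: Seg_Suc)
    then have "\<mu> (par x) = 0" using wv_2[OF p(3)] Suc.prems by simp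
    then show ?thesis using Suc.IH[OF p(1)] Suc.prems p(2) False by (auto simp: Seg_Suc)
  qed
qed

lemma CleanP: "lvd x \<Longrightarrow> (\<forall>j\<in>P x. wv \<mu> j = 0) \<Longrightarrow> \<mu> x = 0"
proof -
  assume a: "lvd x" "\<forall>j\<in>P x. wv \<mu> j = 0"
  have "cs (ah (root x)) = {root x}" using root_prop a ah_prop by blast
  then have "\<mu> (root x) = 0" using a wv_1 by (auto simp: P_def)
  then show ?thesis using Up[OF a(1), of "lv x" \<mu>] a by (auto simp: P_def root_def)
qed

lemma DownP: "lvd x \<Longrightarrow> \<mu> x = 0 \<Longrightarrow> e \<in> P x \<Longrightarrow> (\<forall>j\<in>P x - {e}. wv \<mu> j = 0) \<Longrightarrow> wv \<mu> e = 0"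
proof -
  assume a: "lvd x" "\<mu> x = 0" "e \<in> P x" "\<forall>j\<in>P x - {e}. wv \<mu> j = 0"
  have c: "cs (ah (root x)) = {root x}" using root_prop a ah_prop by blast
  have ni: "ah (root x) \<notin> Seg (lv x) x" using ah_notin_Seg a by simp
  show ?thesis
  proof (cases "e = ah (root x)")
    case True
    have "\<mu> (root x) = 0" using Down[OF a(1), of "lv x" \<mu>] a ni True by (auto simp: P_def root_def)
    then show ?thesis using True c wv_1 by simp
  next
    case False
    then have "wv \<mu> (ah (root x)) = 0" using a(4) by (auto simp: P_def)
    then have "\<mu> (root x) = 0" using wv_1[OF c] by simp
    then show ?thesis using Mid[OF a(1), of "lv x" \<mu> e] a False by (auto simp: P_def root_def)
  qed
qed

lemma b_notin_P:
  assumes "lvd x" "edge b x y" "1 \<le> lv x \<Longrightarrow> b \<noteq> pe x" "1 \<le> lv y \<Longrightarrow> b \<noteq> pe y"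
  shows "b \<notin> P x"
proof
  assume "b \<in> P x"
  then consider "b = ah (root x)" | "b \<in> Seg (lv x) x" by (auto simp: P_def)
  then show False
  proof cases
    case 1
    then show False using root_prop ah_prop assms edge_not1 by metis
  next
    case 2
    then obtain q where q: "b = pe (anc q x)" "1 \<le> lv (anc q x)" "edge b (anc q x) (par (anc q x))"
      using Seg_mem[OF assms(1) _ 2] by auto
    then have "anc q x \<in> {x, y}" using assms(2) by (auto simp: edge_def)
    then show False using q assms by auto
  qed
qed



lemma OneSide:
  assumes "lvd x" "lvd y" "edge b x y" "b \<notin> P x" "e0 \<in> P x" "e0 \<notin> P y" "wv \<mu> e0 \<noteq> 0"
    "\<forall>j\<in>(P x \<union> P y \<union> {b}) - {e0}. wv \<mu> j = 0"
  shows False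
proof -
  have "\<mu> y = 0" using CleanP[OF assms(2)] assms(6,8) by auto
  moreover have "b \<noteq> e0" using assms(4,5) by auto
  then have "wv \<mu> b = 0" using assms(8) by auto
  ultimately have "\<mu> x = 0" using wv_2[OF assms(3)] by simp
  then have "wv \<mu> e0 = 0" using DownP[OF assms(1) _ assms(5)] assms(8) by auto
  with assms(7) show False by simp
qed

lemma CycSide:
  assumes "lvd x" "lvd y" "edge b x y" "i \<le> lv x" "i' \<le> lv y" "anc i x = z" "anc i' y = z"
    "\<nu> z = 0" "e1 \<in> Seg i x" "wv \<nu> e1 \<noteq> 0" "\<forall>j\<in>Seg i x - {e1}. wv \<nu> j = 0"
    "\<forall>j\<in>Seg i' y. wv \<nu> j = 0" "wv \<nu> b = 0"
  shows False
proof -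
  have "\<nu> y = 0" using Up[OF assms(2,5)] assms by auto
  then have "\<nu> x = 0" using wv_2[OF assms(3) assms(13)] by simp
  then have "wv \<nu> e1 = 0" using Mid[OF assms(1,4)] assms by auto
  with assms(10) show False by simp
qed

lemma Cyc:
  assumes "lvd x" "lvd y" "edge b x y" "i \<le> lv x" "i' \<le> lv y" "anc i x = z" "anc i' y = z"
   "Seg i x \<inter> Seg i' y = {}" "b \<notin> Seg i x" "b \<notin> Seg i' y" "\<nu> z = 0"
   "e1 \<in> Seg i x \<union> Seg i' y \<union> {b}" "wv \<nu> e1 \<noteq> 0" "\<forall>j\<in>(Seg i x \<union> Seg i' y \<union> {b}) - {e1}. wv \<nu> j = 0"
  shows False
proof -
  consider "e1 = b" | "e1 \<in> Seg i x" | "e1 \<in> Seg i' y" using assms(12) by auto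
  then show False
  proof cases
    case 1
    have "\<nu> x = 0" using Up[OF assms(1,4)] assms 1 by auto
    moreover have "\<nu> y = 0" using Up[OF assms(2,5)] assms 1 by auto
    ultimately have "wv \<nu> b = 0" using assms(3) by (intro wv_zero) (auto simp: edge_def)
    then show False using 1 assms(13) by simp
  next
    case 2
    show False
      by (rule CycSide[OF assms(1-7,11) 2 assms(13)]) (use assms 2 in auto)
  next
    case 3
    show False
      by (rule CycSide[OF assms(2,1) edge_sym[OF assms(3)] assms(5,4,7,6,11) 3 assms(13)]) (use assms 3 in auto)
  qed
qed

lemma SegSeg:
  assumes "lvd x" "lvd y" "a \<le> lv x" "c \<le> lv y" "j \<in> Seg a x" "j \<in> Seg c y"
  shows "\<exists>p<a. \<exists>q<c. anc p x = anc q y"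
proof -
  obtain p where p: "p < a" "j = pe (anc p x)" "lvd (anc p x)" "1 \<le> lv (anc p x)"
    using Seg_mem[OF assms(1,3,5)] by blast
  obtain q where q: "q < c" "j = pe (anc q y)" "lvd (anc q y)" "1 \<le> lv (anc q y)"
    using Seg_mem[OF assms(2,4,6)] by blast
  have "anc p x = anc q y" using pe_inj[OF p(3) q(3) p(4) q(4)] p(2) q(2) by simp
  then show ?thesis using p q by blast
qed

lemma P_split:
  assumes "lvd x" "i \<le> lv x"
  shows "P x = Seg i x \<union> P (anc i x)"
proof -
  have l: "lv (anc i x) = lv x - i" using anc_prop assms by auto
  have "root (anc i x) = root x"
    unfolding root_def l using anc_add[of i "lv x - i" x] assms by simp
  moreover have "Seg (lv x) x = Seg i x \<union> Seg (lv (anc i x)) (anc i x)"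
    unfolding l using Seg_add[of i "lv x - i" x] assms by simp
  ultimately show ?thesis unfolding P_def by auto
qed

lemma ah_P_Seg:
  assumes "lvd x" "lvd y" "j \<in> P x" "j \<in> Seg a y" "a \<le> lv y"
  shows "j \<in> Seg (lv x) x"
proof -
  have "cs (ah (root x)) = {root x}" using root_prop ah_prop assms by blast
  then have "j \<noteq> ah (root x)" using Seg_edge[OF assms(2,5,4)] by metis
  then show ?thesis using assms(3) by (auto simp: P_def)
qed

lemma Inter:
  assumes "lvd x" "lvd y" "edge b x y" "b \<notin> P x" "b \<notin> P y" "e0 \<in> P x" "e0 \<in> P y"
    "wv \<mu> e0 \<noteq> 0" "\<forall>j\<in>(P x \<union> P y \<union> {b}) - {e0}. wv \<mu> j = 0" "lv x + lv y + 1 \<le> t"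
  shows False
proof -
  have common: "\<exists>i\<le>lv x. \<exists>i'\<le>lv y. anc i x = anc i' y"
  proof (cases "e0 = ah (root x)")
    case True
    have cx: "cs e0 = {root x}" using True root_prop ah_prop assms(1) by blast
    show ?thesis
    proof (cases "e0 = ah (root y)")
      case True
      have "cs e0 = {root y}" using True root_prop ah_prop assms(2) by blast
      then have "root x = root y" using cx by simp
      then show ?thesis unfolding root_def by blast
    next
      case False
      then have "e0 \<in> Seg (lv y) y" using assms(7) by (auto simp: P_def)
      then show ?thesis using Seg_edge[OF assms(2) le_refl] cx by metis
    qed
  next
    case False
    then have ex: "e0 \<in> Seg (lv x) x" using assms(6) by (auto simp: P_def)
    then have "e0 \<in> Seg (lv y) y" using ah_P_Seg[OF assms(2,1,7) ex le_refl] by simp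
    then show ?thesis using SegSeg[OF assms(1,2) le_refl le_refl ex] by (meson less_imp_le)
  qed
  define i0 where "i0 = (LEAST i. i \<le> lv x \<and> (\<exists>i'\<le>lv y. anc i x = anc i' y))"
  have i0: "i0 \<le> lv x \<and> (\<exists>i'\<le>lv y. anc i0 x = anc i' y)"
    unfolding i0_def using common by (rule LeastI_ex)
  then obtain i' where i': "i' \<le> lv y" "anc i0 x = anc i' y" by blast
  have mini: "p \<le> lv x \<Longrightarrow> q \<le> lv y \<Longrightarrow> anc p x = anc q y \<Longrightarrow> i0 \<le> p" for p q
    unfolding i0_def by (rule Least_le) blast
  define z where "z = anc i0 x"
  have z: "lvd z" "lv z = lv x - i0" using anc_prop assms(1) i0 by (auto simp: z_def)
  have z2: "lv z = lv y - i'" using anc_prop[OF assms(2) i'(1)] i'(2) by (simp add: z_def)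
  have disj: "Seg i0 x \<inter> Seg i' y = {}"
  proof (rule ccontr)
    assume "Seg i0 x \<inter> Seg i' y \<noteq> {}"
    then obtain j where "j \<in> Seg i0 x" "j \<in> Seg i' y" by blast
    then obtain p q where "p < i0" "q < i'" "anc p x = anc q y"
      using SegSeg[OF assms(1,2) _ i'(1)] i0 by blast
    then show False using mini[of p q] i0 i' by linarith
  qed
  have Px: "P x = Seg i0 x \<union> P z" using P_split[OF assms(1)] i0 by (simp add: z_def)
  have Py: "P y = Seg i' y \<union> P z" using P_split[OF assms(2) i'(1)] i'(2) by (simp add: z_def)
  have n1: "e0 \<notin> Seg i0 x"
  proof
    assume a: "e0 \<in> Seg i0 x"
    have "e0 \<in> Seg (lv y) y" using ah_P_Seg[OF assms(2,1,7) a] i0 by simp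
    then obtain p q where "p < i0" "q < lv y" "anc p x = anc q y"
      using SegSeg[OF assms(1,2) _ le_refl a] i0 by blast
    then show False using mini[of p q] i0 by linarith
  qed
  have n2: "e0 \<notin> Seg i' y"
  proof
    assume a: "e0 \<in> Seg i' y"
    have "e0 \<in> Seg (lv x) x" using ah_P_Seg[OF assms(1,2,6) a i'(1)] .
    then obtain p q where pq: "p < lv x" "q < i'" "anc p x = anc q y"
      using SegSeg[OF assms(1,2) le_refl i'(1) _ a] by blast
    have l1: "lv (anc p x) = lv x - p" using anc_prop[OF assms(1)] pq(1) by simp
    have l2: "lv (anc q y) = lv y - q" using anc_prop[OF assms(2)] pq(2) i'(1) by simp
    have "lv x - p = lv y - q" using l1 l2 pq(3) by simp
    then have "p < i0" using pq z z2 i'(1) i0 by linarith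
    then show False using mini[of p q] pq i'(1) by linarith
  qed
  have e0z: "e0 \<in> P z" using assms(6) Px n1 by auto
  have muz: "\<mu> z \<noteq> 0"
  proof
    assume "\<mu> z = 0"
    then have "wv \<mu> e0 = 0" using DownP[OF z(1) _ e0z] assms(9) Px by auto
    then show False using assms(8) by simp
  qed
  define S where "S = Seg i0 x \<union> Seg i' y \<union> {b}"
  have cS: "card S \<le> t"
  proof -
    have "card S \<le> card (Seg i0 x) + card (Seg i' y) + card {b}"
      unfolding S_def by (meson add_le_mono card_Un_le le_refl order_trans)
    then show ?thesis using card_Seg[of i0 x] card_Seg[of i' y] i0 i'(1) assms(10) by simp
  qed
  obtain \<mu>2 e1 where e1: "e1 \<in> S" "wv \<mu>2 e1 \<noteq> 0" "\<forall>j\<in>S - {e1}. wv \<mu>2 j = 0"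
    using Q'[OF _ cS] by (auto simp: S_def)
  define \<nu> where "\<nu> = (\<lambda>h. \<mu>2 h - (\<mu>2 z / \<mu> z) * \<mu> h)"
  have nz: "\<nu> z = 0" using muz by (simp add: \<nu>_def)
  have bS: "b \<noteq> e0" using assms(4,6) by auto
  have z0: "j \<in> S \<Longrightarrow> wv \<mu> j = 0" for j
    using assms(9) n1 n2 bS Px Py by (auto simp: S_def)
  have same: "j \<in> S \<Longrightarrow> wv \<nu> j = wv \<mu>2 j" for j
    using z0 unfolding \<nu>_def wv_lin by simp
  show False
  proof (rule Cyc[of x y b i0 i' z \<nu> e1])
    show "b \<notin> Seg i0 x" using assms(4) Px by auto
    show "b \<notin> Seg i' y" using assms(5) Py by auto
    show "e1 \<in> Seg i0 x \<union> Seg i' y \<union> {b}" using e1 by (simp add: S_def)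
    show "wv \<nu> e1 \<noteq> 0" using e1 same by simp
    show "\<forall>j\<in>Seg i0 x \<union> Seg i' y \<union> {b} - {e1}. wv \<nu> j = 0" using e1 same by (auto simp: S_def)
  qed (use assms(1,2,3) i0 i' disj nz in \<open>auto simp: z_def\<close>)
qed

lemma Two:
  assumes "lvd x" "lvd y" "edge b x y" "1 \<le> lv x \<Longrightarrow> b \<noteq> pe x" "1 \<le> lv y \<Longrightarrow> b \<noteq> pe y"
  shows "t < lv x + lv y + 3"
proof (rule ccontr)
  assume "\<not> t < lv x + lv y + 3"
  then have tle: "lv x + lv y + 3 \<le> t" by simp
  have bx: "b \<notin> P x" using b_notin_P[OF assms(1,3)] assms by blast
  have by': "b \<notin> P y" using b_notin_P[OF assms(2) edge_sym[OF assms(3)]] assms by blast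
  define E where "E = P x \<union> P y \<union> {b}"
  have cE: "card E \<le> t"
  proof -
    have "card E \<le> card (P x) + card (P y) + card {b}"
      unfolding E_def by (meson add_le_mono card_Un_le le_refl order_trans)
    then show ?thesis using card_P[of x] card_P[of y] tle by simp
  qed
  obtain \<mu> e0 where e0: "e0 \<in> E" "wv \<mu> e0 \<noteq> 0" "\<forall>j\<in>E - {e0}. wv \<mu> j = 0"
    using Q'[OF _ cE] by (auto simp: E_def)
  consider "e0 = b" | "e0 \<in> P x" "e0 \<notin> P y" | "e0 \<in> P y" "e0 \<notin> P x" | "e0 \<in> P x" "e0 \<in> P y"
    using e0(1) by (auto simp: E_def)
  then show False
  proof cases
    case 1
    have "\<mu> x = 0" using CleanP[OF assms(1)] e0 bx 1 by (auto simp: E_def)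
    moreover have "\<mu> y = 0" using CleanP[OF assms(2)] e0 by' 1 by (auto simp: E_def)
    ultimately have "wv \<mu> b = 0" using assms(3) by (intro wv_zero) (auto simp: edge_def)
    then show False using 1 e0 by simp
  next
    case 2
    show False by (rule OneSide[OF assms(1,2,3) bx 2 e0(2)]) (use e0 in \<open>auto simp: E_def\<close>)
  next
    case 3
    show False by (rule OneSide[OF assms(2,1) edge_sym[OF assms(3)] by' 3 e0(2)]) (use e0 in \<open>auto simp: E_def\<close>)
  next
    case 4
    show False by (rule Inter[OF assms(1,2,3) bx by' 4 e0(2)]) (use e0 tle in \<open>auto simp: E_def\<close>)
  qed
qed



definition G :: "nat \<Rightarrow> real" where "G i = (\<Sum>q<i. real r ^ q)"
definition D :: real where "D = (if t = 2 * s + 2 then 2 * G (s+1) else 2 * G (s+1) - 1)"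
definition al :: "nat \<Rightarrow> real" where "al i = real r ^ (s+1-i) * G i / D"
definition be :: "nat \<Rightarrow> real" where "be i = 1 - al i"
definition V :: real where "V = 1 + real r ^ (s+1) / D"

lemma G_Suc: "G (Suc i) = G i + real r ^ i" by (simp add: G_def)
lemma G_nonneg: "0 \<le> G i" by (simp add: G_def sum_nonneg)
lemma G_geo: "(real r - 1) * G i = real r ^ i - 1"
  by (induction i) (auto simp: G_Suc algebra_simps G_def[of 0])
lemma G_ge: "1 \<le> i \<Longrightarrow> real r ^ (i-1) \<le> G i"
  using G_Suc[of "i-1"] G_nonneg[of "i-1"] by simp
lemma G1: "1 \<le> G (s+1)"
proof -
  have "1 \<le> real r ^ s" using r3 by (intro one_le_power) simp
  then show ?thesis using G_Suc[of s] G_nonneg[of s] by simp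
qed
lemma D_ge: "1 \<le> D" using G1 by (simp add: D_def)
lemma D_pos: "0 < D" using D_ge by simp
lemma al0: "al 0 = 0" by (simp add: al_def G_def)
lemma be0: "be 0 = 1" by (simp add: be_def al0)
lemma al_nonneg: "0 \<le> al i" using G_nonneg D_pos by (simp add: al_def)

lemma K1: assumes "i < s" shows "be i + real r * al (i+1) = V"
proof -
  have e1: "real r ^ (s+1-i) = real r * real r ^ (s-i)" using assms by (simp add: Suc_diff_le)
  have e2: "real r ^ (s + 1 - (i+1)) = real r ^ (s-i)" by simp
  have e3: "real r ^ (s-i) * real r ^ i = real r ^ s" using assms by (simp flip: power_add)
  have "be i + real r * al (i+1) = 1 + (real r * (real r ^ (s-i) * real r ^ i)) / D"
    unfolding be_def al_def e1 e2 G_Suc[of i, unfolded Suc_eq_plus1] using D_pos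
    by (simp add: field_simps)
  also have "\<dots> = V" unfolding e3 V_def by simp
  finally show ?thesis .
qed

lemma K2e: assumes "t = 2 * s + 2" shows "be s + real r / 2 = V"
proof -
  have D: "D = 2 * (G s + real r ^ s)" unfolding D_def using assms G_Suc[of s] by simp
  have Dp: "G s + real r ^ s > 0" using D D_pos by simp
  have "be s + real r / 2 = 1 + (real r * real r ^ s) / D"
    unfolding be_def al_def D using Dp by (simp add: field_simps)
  then show ?thesis by (simp add: V_def)
qed

lemma K2o: assumes "t \<noteq> 2 * s + 2" shows "(real r + 1) * be s = V"
proof -
  have D: "D = 2 * G s + 2 * real r ^ s - 1" unfolding D_def using assms G_Suc[of s] by simp
  have g: "real r * G s = G s + real r ^ s - 1" using G_geo[of s] by (simp add: algebra_simps)
  have Dp: "D > 0" by (rule D_pos)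
  have "(real r + 1) * (D - real r * G s) = D + real r * real r ^ s"
    unfolding D using g by (simp add: algebra_simps)
  then have "(real r + 1) * be s = (D + real r * real r ^ s) / D"
    unfolding be_def al_def using Dp by (simp add: field_simps)
  also have "\<dots> = V" unfolding V_def using Dp by (simp add: field_simps)
  finally show ?thesis .
qed

lemma K3: assumes "1 \<le> i" "i \<le> s" shows "1/3 \<le> al i"
proof -
  have r3': "3 \<le> real r" using r3 by simp
  have "real r ^ (s+1-i) * real r ^ (i-1) = real r ^ s" using assms by (simp flip: power_add)
  moreover have "real r ^ (s+1-i) * real r ^ (i-1) \<le> real r ^ (s+1-i) * G i"
    using G_ge[OF assms(1)] by (intro mult_left_mono) auto
  ultimately have n: "real r ^ s \<le> real r ^ (s+1-i) * G i" by simp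
  have "(real r - 1) * G s = real r ^ s - 1" by (rule G_geo)
  moreover have "2 * G s \<le> (real r - 1) * G s" using G_nonneg[of s] r3' by (intro mult_right_mono) auto
  ultimately have "2 * G s \<le> real r ^ s" by simp
  then have "D \<le> 3 * real r ^ s" using G_Suc[of s] by (simp add: D_def)
  then have "D \<le> 3 * (real r ^ (s+1-i) * G i)" using n by simp
  then show ?thesis unfolding al_def using D_pos by (simp add: field_simps)
qed

lemma K4: "1/2 \<le> be s"
proof -
  have g: "real r * G s = G (s+1) - 1" using G_geo[of s] G_Suc[of s] by (simp add: algebra_simps)
  have "2 * (real r * G s) \<le> D" unfolding g using G1 by (simp add: D_def)
  then have "al s \<le> 1/2" unfolding al_def using D_pos by (simp add: field_simps)
  then show ?thesis by (simp add: be_def)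
qed

lemma V_ge: "(real r + 1) / 2 \<le> V"
proof (cases "t = 2 * s + 2")
  case True then show ?thesis using K2e K4 by (metis add_divide_distrib add_le_cancel_right add.commute one_add_one field_sum_of_halves)
next
  case False
  have "(real r + 1) * (1/2) \<le> (real r + 1) * be s" using K4 by (intro mult_left_mono) auto
  then show ?thesis using K2o[OF False] by simp
qed



lemma F1: assumes "2 \<le> t" "cs j = {h}" "cs j' = {h}" shows "j = j'"
proof (rule ccontr)
  assume ne: "j \<noteq> j'"
  have "card {j, j'} \<le> t" using ne assms(1) by simp
  then obtain \<mu> e where e: "e \<in> {j, j'}" "wv \<mu> e \<noteq> 0" "\<forall>x\<in>{j,j'} - {e}. wv \<mu> x = 0"
    using Q'[of "{j, j'}"] by blast
  have "wv \<mu> j = 0 \<longleftrightarrow> wv \<mu> j' = 0" using wv_1[OF assms(2)] wv_1[OF assms(3)] by simp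
  then show False using e ne by auto
qed

lemma cs_ne: "cs j \<noteq> {}"
proof
  assume a: "cs j = {}"
  have "card {j} \<le> t" using t1 by simp
  then obtain \<mu> e where "e \<in> {j}" "wv \<mu> e \<noteq> 0" using Q'[of "{j}"] by blast
  then show False using a by (simp add: wv_cs)
qed

definition val :: "'c \<Rightarrow> 'r \<Rightarrow> real" where
 "val j h = (if card (cs j) = 1 then 1 else if card (cs j) = 2 then
     (if (\<exists>y\<in>cs j. y \<noteq> h \<and> lvd h \<and> lvd y \<and> lv y = lv h + 1) then al (lv h + 1)
      else if (\<exists>y\<in>cs j. y \<noteq> h \<and> lvd h \<and> lvd y \<and> lv h = lv y + 1) then be (lv h) else 1/2)
   else 1 / real (card (cs j)))"

lemma val1: "cs j = {h} \<Longrightarrow> val j h = 1" by (simp add: val_def)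
lemma val3: "3 \<le> card (cs j) \<Longrightarrow> val j h \<le> 1/3" by (simp add: val_def field_simps)
lemma val_edge: "edge j h y \<Longrightarrow> val j h = (if lvd h \<and> lvd y \<and> lv y = lv h + 1 then al (lv h + 1)
   else if lvd h \<and> lvd y \<and> lv h = lv y + 1 then be (lv h) else 1/2)"
  by (auto simp: val_def edge_def)

lemma col_cases: assumes "h \<in> cs j" shows "cs j = {h} \<or> (\<exists>y. edge j h y) \<or> 3 \<le> card (cs j)"
proof -
  have "card (cs j) \<ge> 1" using assms fin_cs by (metis One_nat_def Suc_leI card_gt_0_iff empty_iff)
  then consider "card (cs j) = 1" | "card (cs j) = 2" | "3 \<le> card (cs j)" by linarith
  then show ?thesis
  proof cases
    case 1 then show ?thesis using assms by (auto simp: card_1_singleton_iff)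
  next
    case 2 then obtain a b where "cs j = {a, b}" "a \<noteq> b" by (auto simp: card_2_iff)
    then show ?thesis using assms by (auto simp: edge_def insert_commute)
  qed simp
qed

lemma colsum: "(\<Sum>h\<in>cs j. val j h) = 1"
proof -
  obtain h where h: "h \<in> cs j" using cs_ne by blast
  consider "cs j = {h}" | y where "edge j h y" | "3 \<le> card (cs j)" using col_cases[OF h] by blast
  then show ?thesis
  proof cases
    case 1 then show ?thesis by (simp add: val1)
  next
    case 2
    then have c: "cs j = {h, y}" "h \<noteq> y" by (auto simp: edge_def)
    have "(\<Sum>h\<in>cs j. val j h) = val j h + val j y" using c by simp
    also have "\<dots> = 1" unfolding val_edge[OF 2] val_edge[OF edge_sym[OF 2]] by (auto simp: be_def)
    finally show ?thesis .
  next
    case 3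
    then have "card (cs j) \<noteq> 1" "card (cs j) \<noteq> 2" by auto
    then have "(\<Sum>h\<in>cs j. val j h) = real (card (cs j)) * (1 / real (card (cs j)))"
      by (simp add: val_def)
    then show ?thesis using 3 by simp
  qed
qed

lemma total: "real CARD('c) = (\<Sum>h\<in>H. \<Sum>j\<in>{j. A h j \<noteq> 0}. val j h)"
proof -
  have "real CARD('c) = (\<Sum>j\<in>UNIV. \<Sum>h\<in>cs j. val j h)" by (simp add: colsum)
  also have "\<dots> = (\<Sum>j\<in>UNIV. \<Sum>h\<in>H. if A h j \<noteq> 0 then val j h else 0)"
    unfolding cs_def using finH by (simp add: sum.inter_filter)
  also have "\<dots> = (\<Sum>h\<in>H. \<Sum>j\<in>UNIV. if A h j \<noteq> 0 then val j h else 0)" by (rule sum.swap)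
  also have "\<dots> = (\<Sum>h\<in>H. \<Sum>j\<in>{j. A h j \<noteq> 0}. val j h)"
    by (simp add: sum.inter_filter[symmetric])
  finally show ?thesis .
qed

lemma sumb1: "finite R \<Longrightarrow> card R \<le> c \<Longrightarrow> (\<forall>j\<in>R. f j \<le> M) \<Longrightarrow> 0 \<le> M \<Longrightarrow> sum f R \<le> real c * M"
proof -
  assume a: "finite R" "card R \<le> c" "\<forall>j\<in>R. f j \<le> M" "0 \<le> M"
  have "sum f R \<le> (\<Sum>j\<in>R. M)" using a by (intro sum_mono) auto
  also have "\<dots> = real (card R) * M" by simp
  also have "\<dots> \<le> real c * M" using a by (intro mult_right_mono) auto
  finally show ?thesis .
qed

lemma sumb2: "finite R \<Longrightarrow> j0 \<in> R \<Longrightarrow> card R \<le> c + 1 \<Longrightarrow> f j0 \<le> B \<Longrightarrow> (\<forall>j\<in>R-{j0}. f j \<le> M) \<Longrightarrow> 0 \<le> M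
   \<Longrightarrow> sum f R \<le> B + real c * M"
proof -
  assume a: "finite R" "j0 \<in> R" "card R \<le> c + 1" "f j0 \<le> B" "\<forall>j\<in>R-{j0}. f j \<le> M" "0 \<le> M"
  have "sum f R = f j0 + sum f (R - {j0})" using a by (simp add: sum.remove)
  moreover have "sum f (R - {j0}) \<le> real c * M"
    using a by (intro sumb1) (auto simp: card_Diff_singleton)
  ultimately show ?thesis using a by simp
qed

definition sp :: "'r \<Rightarrow> 'c" where "sp h = (if lv h = 0 then ah h else pe h)"

lemma sp_prop: assumes "lvd h" shows "h \<in> cs (sp h) \<and> val (sp h) h = be (lv h)"
proof (cases "lv h = 0")
  case True
  then have "h \<in> T0" using lv0 assms by (auto simp: lvd_def)
  then have "cs (ah h) = {h}" by (rule ah_prop)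
  then show ?thesis using True by (simp add: sp_def val1 be0)
next
  case False
  then have p: "lvd (par h)" "lv (par h) = lv h - 1" "edge (pe h) h (par h)" using par_prop assms by auto
  have "val (pe h) h = be (lv h)" unfolding val_edge[OF p(3)] using p False assms by auto
  then show ?thesis using False p(3) by (simp add: sp_def edge_def)
qed

lemma other_ne_pe: "edge j h y \<Longrightarrow> lvd y \<Longrightarrow> 1 \<le> lv y \<Longrightarrow> lv y \<noteq> lv h + 1 \<Longrightarrow> j \<noteq> pe y"
proof
  assume a: "edge j h y" "lvd y" "1 \<le> lv y" "lv y \<noteq> lv h + 1" "j = pe y"
  have p: "lv (par y) = lv y - 1" "edge (pe y) y (par y)" using par_prop a by auto
  then have "{h, y} = {y, par y}" using a by (auto simp: edge_def)
  then have "par y = h" using a(1) by (auto simp: edge_def doubleton_eq_iff)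
  then show False using p a by simp
qed

lemma in_R: "h \<in> H \<Longrightarrow> j \<in> {j. A h j \<noteq> 0} \<longleftrightarrow> h \<in> cs j" by (simp add: cs_def)

lemma lvd_edge: assumes "lvd h" "lv h < s" "edge j h y" shows "lvd y \<and> lv y \<le> lv h + 1 \<and> lv h \<le> lv y + 1"
proof -
  have "reach (lv h) h" using assms reach_lv by (auto simp: lvd_def)
  then have r: "reach (Suc (lv h)) y" using reach_edge[OF edge_sym[OF assms(3)]] by blast
  then have "lvd y" unfolding lvd_def using reach_mono[OF r] assms(2) by simp
  moreover have "lv y \<le> lv h + 1" using reach_lv[OF r] by simp
  moreover have "lv h \<le> lv y + 1" using lv_edge[OF assms(3)] \<open>lvd y\<close> by (auto simp: lvd_def)
  ultimately show ?thesis by simp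
qed

lemma rowA: assumes "h \<in> H" "lvd h" "lv h < s" shows "(\<Sum>j\<in>{j. A h j \<noteq> 0}. val j h) \<le> V"
proof -
  let ?i = "lv h"
  have sp: "h \<in> cs (sp h)" "val (sp h) h = be ?i" using sp_prop assms by auto
  have oth: "val j h \<le> al (?i + 1)" if j: "h \<in> cs j" "j \<noteq> sp h" for j
  proof -
    consider "cs j = {h}" | y where "edge j h y" | "3 \<le> card (cs j)" using col_cases[OF j(1)] by blast
    then show ?thesis
    proof cases
      case 1
      then have "h \<in> T0" by (auto simp: T0_def)
      then have "?i = 0" using T0_lv by blast
      then have "sp h = ah h" by (simp add: sp_def)
      moreover have "j = ah h" using F1 1 ah_prop[OF \<open>h \<in> T0\<close>] ts1 assms(3) by simp
      ultimately show ?thesis using j by simp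
    next
      case 2
      have y: "lvd y" "lv y \<le> ?i + 1" "?i \<le> lv y + 1" using lvd_edge[OF assms(2,3) 2] by auto
      show ?thesis
      proof (cases "lv y = ?i + 1")
        case True then show ?thesis unfolding val_edge[OF 2] using y assms by simp
      next
        case False
        have "t < ?i + lv y + 3"
        proof (rule Two[OF assms(2) y(1) 2])
          show "1 \<le> ?i \<Longrightarrow> j \<noteq> pe h" using j by (simp add: sp_def)
          show "1 \<le> lv y \<Longrightarrow> j \<noteq> pe y" using other_ne_pe[OF 2 y(1) _ False] by simp
        qed
        then show ?thesis using False y assms ts1 by linarith
      qed
    next
      case 3
      have "val j h \<le> 1/3" using 3 by (rule val3)
      moreover have "1/3 \<le> al (?i + 1)" using assms(3) by (intro K3) auto
      ultimately show ?thesis by linarith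
    qed
  qed
  have "(\<Sum>j\<in>{j. A h j \<noteq> 0}. val j h) \<le> be ?i + real r * al (?i + 1)"
    by (rule sumb2) (use sp oth rowwt[OF assms(1)] in_R[OF assms(1)] al_nonneg in auto)
  also have "\<dots> = V" using K1 assms by simp
  finally show ?thesis .
qed

lemma rowB: assumes "h \<in> H" "lvd h" "lv h = s" "t = 2 * s + 2" shows "(\<Sum>j\<in>{j. A h j \<noteq> 0}. val j h) \<le> V"
proof -
  have sp: "h \<in> cs (sp h)" "val (sp h) h = be s" using sp_prop assms by auto
  have oth: "val j h \<le> 1/2" if j: "h \<in> cs j" "j \<noteq> sp h" for j
  proof -
    consider "cs j = {h}" | y where "edge j h y" | "3 \<le> card (cs j)" using col_cases[OF j(1)] by blast
    then show ?thesis
    proof cases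
      case 1
      then have "h \<in> T0" by (auto simp: T0_def)
      then have "lv h = 0" using T0_lv by blast
      then have "sp h = ah h" by (simp add: sp_def)
      moreover have "j = ah h" using F1 1 ah_prop[OF \<open>h \<in> T0\<close>] assms(4) by simp
      ultimately show ?thesis using j by simp
    next
      case 2
      have ly: "lvd y \<Longrightarrow> lv y \<le> s" using reach_lv by (auto simp: lvd_def)
      show ?thesis
      proof (cases "lvd y \<and> s = lv y + 1")
        case True
        have "t < lv h + lv y + 3"
        proof (rule Two[OF assms(2) _ 2])
          show "lvd y" using True by blast
          show "1 \<le> lv h \<Longrightarrow> j \<noteq> pe h" using j by (simp add: sp_def)
          have "lv y \<noteq> lv h + 1" using True assms(3) by linarith
          then show "1 \<le> lv y \<Longrightarrow> j \<noteq> pe y" using other_ne_pe[OF 2] True by blast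
        qed
        then show ?thesis using True assms by linarith
      next
        case False
        then show ?thesis unfolding val_edge[OF 2] using ly assms by auto
      qed
    next
      case 3
      then show ?thesis using val3[of j h] by simp
    qed
  qed
  have "(\<Sum>j\<in>{j. A h j \<noteq> 0}. val j h) \<le> be s + real r * (1/2)"
    by (rule sumb2) (use sp oth rowwt[OF assms(1)] in_R[OF assms(1)] in auto)
  also have "\<dots> = V" using K2e assms by simp
  finally show ?thesis .
qed

lemma rowC: assumes "h \<in> H" "lvd h" "lv h = s" "t \<noteq> 2 * s + 2" shows "(\<Sum>j\<in>{j. A h j \<noteq> 0}. val j h) \<le> V"
proof -
  have all: "val j h \<le> be s" if j: "h \<in> cs j" for j
  proof -
    consider "cs j = {h}" | y where "edge j h y" | "3 \<le> card (cs j)" using col_cases[OF j(1)] by blast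
    then show ?thesis
    proof cases
      case 1
      then have "h \<in> T0" by (auto simp: T0_def)
      then have "lv h = 0" using T0_lv by blast
      then have "be s = 1" by (metis assms(3) be0)
      then show ?thesis using val1[OF 1] by simp
    next
      case 2
      have ly: "lvd y \<Longrightarrow> lv y \<le> s" using reach_lv by (auto simp: lvd_def)
      show ?thesis unfolding val_edge[OF 2] using ly assms K4 by auto
    next
      case 3
      then show ?thesis using val3[of j h] K4 by simp
    qed
  qed
  have "(\<Sum>j\<in>{j. A h j \<noteq> 0}. val j h) \<le> real (r + 1) * be s"
    by (rule sumb1) (use all rowwt[OF assms(1)] in_R[OF assms(1)] K4 in auto)
  also have "\<dots> = V" using K2o[OF assms(4)] by (simp add: add.commute)
  finally show ?thesis .
qed

lemma rowD: assumes "h \<in> H" "\<not> lvd h" shows "(\<Sum>j\<in>{j. A h j \<noteq> 0}. val j h) \<le> V"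
proof -
  have all: "val j h \<le> 1/2" if j: "h \<in> cs j" for j
  proof -
    consider "cs j = {h}" | y where "edge j h y" | "3 \<le> card (cs j)" using col_cases[OF j(1)] by blast
    then show ?thesis
    proof cases
      case 1
      then have "h \<in> T0" by (auto simp: T0_def)
      then have "lvd h" unfolding lvd_def using T0_lv[OF \<open>h \<in> T0\<close>] reach_mono[of 0 h s] by simp
      then show ?thesis using assms by simp
    next
      case 2
      show ?thesis unfolding val_edge[OF 2] using assms by auto
    next
      case 3
      then show ?thesis using val3[of j h] by simp
    qed
  qed
  have "(\<Sum>j\<in>{j. A h j \<noteq> 0}. val j h) \<le> real (r + 1) * (1/2)"
    by (rule sumb1) (use all rowwt[OF assms(1)] in_R[OF assms(1)] in auto)
  also have "\<dots> \<le> V" using V_ge by simp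
  finally show ?thesis .
qed

lemma rowbound: assumes "h \<in> H" shows "(\<Sum>j\<in>{j. A h j \<noteq> 0}. val j h) \<le> V"
proof (cases "lvd h")
  case True
  have "lv h \<le> s" using True reach_lv by (auto simp: lvd_def)
  then consider "lv h < s" | "lv h = s" by linarith
  then show ?thesis
  proof cases
    case 1 then show ?thesis using rowA assms True by blast
  next
    case 2 then show ?thesis using rowB rowC assms True by blast
  qed
next
  case False then show ?thesis using rowD assms by blast
qed

theorem main: "real CARD('c) \<le> real (card H) * V"
proof -
  have "real CARD('c) = (\<Sum>h\<in>H. \<Sum>j\<in>{j. A h j \<noteq> 0}. val j h)" by (rule total)
  also have "\<dots> \<le> (\<Sum>h\<in>H. V)" by (intro sum_mono rowbound)
  also have "\<dots> = real (card H) * V" by simp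
  finally show ?thesis .
qed


end


lemma dotp_left_axis: "dotp (axis l 1) c = c $ l"
proof -
  have "dotp (axis l 1) c = (\<Sum>j\<in>UNIV. if j = l then c $ j else 0)"
    unfolding dotp_def axis_def by (intro sum.cong) auto
  then show ?thesis by simp
qed

theorem mainTheorem1:
  fixes C :: "('a::{field,finite} ^ 'n) set" and n k r t :: nat
  assumes "r \<ge> 3" and "t \<ge> 1" and "seq_LRC C n k r t"
  shows "let s = (t - 1) div 2 in
     (if even t
      then real k / real n \<le> real r ^ (s + 1) / (real r ^ (s + 1) + 2 * (\<Sum>i=0..s. real r ^ i))
      else real k / real n \<le> real r ^ (s + 1) / (real r ^ (s + 1) + 2 * (\<Sum>i=1..s. real r ^ i) + 1))"
proof -
  have sub: "vec.subspace C" and nn: "CARD('n) = n" and kk: "vec.dim C = k" and sr: "seq_recoverable C r t"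
    using assms(3) by (auto simp: seq_LRC_def)
  define s where "s = (t - 1) div 2"
  have ts1: "2 * s + 1 \<le> t" and ts2: "t \<le> 2 * s + 2" using assms(2) by (auto simp: s_def)
  define W where "W = {w :: 'a ^ 'n. (\<forall>c\<in>C. dotp w c = 0) \<and> card {j. w $ j \<noteq> 0} \<le> r + 1}"
  obtain B where B: "B \<subseteq> W" "vec.independent B" "W \<subseteq> vec.span B"
    using vec.maximal_independent_subset[of W] by blast
  have finB: "finite B" using B(2) vec.finiteI_independent by blast
  have CK: "C \<subseteq> Kset B" using B(1) by (auto simp: Kset_def W_def)
  have cardB: "card B + k \<le> n"
    using vec.dim_subset[OF CK] dim_Kset[OF B(2)] kk nn by simp
  have Qh: "\<exists>\<mu>. card {j\<in>E. (\<Sum>h\<in>B. \<mu> h * h $ j) \<noteq> 0} = 1" if E: "E \<noteq> {}" "card E \<le> t" for E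
  proof -
    obtain l where l: "distinct l" "set l = E" and rec: "\<forall>j<length l. \<exists>(R::'n set) (a::'n \<Rightarrow> 'a).
              card R \<le> r \<and> R \<inter> set (drop j l) = {} \<and>
              (\<forall>c\<in>C. c $ (l ! j) = (\<Sum>i\<in>R. a i * c $ i))"
      using sr E unfolding seq_recoverable_def by blast
    have "0 < length l" using l E by (cases l) auto
    then obtain R a where Ra: "card R \<le> r" "R \<inter> set l = {}" "\<forall>c\<in>C. c $ (l ! 0) = (\<Sum>i\<in>R. a i * c $ i)"
      using rec by fastforce
    define l0 where "l0 = l ! 0"
    have l0E: "l0 \<in> E" using l \<open>0 < length l\<close> by (auto simp: l0_def)
    have l0R: "l0 \<notin> R" using Ra(2) l0E l(2) by auto
    define v where "v = (\<chi> i. if i \<in> R then a i else (0::'a))"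
    define w where "w = axis l0 1 - v"
    have wi: "w $ i = (if i = l0 then 1 else 0) - (if i \<in> R then a i else 0)" for i
      by (simp add: w_def v_def axis_def)
    have dv: "dotp v c = (\<Sum>i\<in>R. a i * c $ i)" for c
    proof -
      have "dotp v c = (\<Sum>i\<in>UNIV. if i \<in> R then a i * c $ i else 0)"
        unfolding dotp_def v_def by (intro sum.cong) auto
      also have "\<dots> = (\<Sum>i\<in>UNIV \<inter> R. a i * c $ i)"
        using sum.inter_restrict[of UNIV "\<lambda>i. a i * c $ i" R] by simp
      finally show ?thesis by simp
    qed
    have "dotp w c = 0" if "c \<in> C" for c
    proof -
      have "dotp w c = dotp (axis l0 1) c - dotp v c"
        unfolding w_def by (simp add: dotp_def algebra_simps sum_subtractf)
      then show ?thesis using Ra(3) that dv by (simp add: dotp_left_axis l0_def)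
    qed
    moreover have "card {j. w $ j \<noteq> 0} \<le> r + 1"
    proof -
      have "{j. w $ j \<noteq> 0} \<subseteq> insert l0 R" using wi by auto
      then have "card {j. w $ j \<noteq> 0} \<le> card (insert l0 R)" by (intro card_mono) auto
      also have "\<dots> \<le> r + 1" using Ra(1) card_insert_le_m1 by (simp add: card_insert_if)
      finally show ?thesis .
    qed
    ultimately have "w \<in> vec.span B" using B(3) by (auto simp: W_def)
    then obtain u where u: "w = (\<Sum>v\<in>B. u v *s v)" using vec.span_finite[OF finB] by auto
    have wc: "w $ j = (\<Sum>h\<in>B. u h * h $ j)" for j unfolding u by (simp add: sum_component)
    have "{j\<in>E. (\<Sum>h\<in>B. u h * h $ j) \<noteq> 0} = {l0}"
    proof -
      have A1: "w $ j = 0" if "j \<in> E" "j \<noteq> l0" for j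
      proof -
        have "j \<notin> R" using Ra(2) l(2) that by auto
        then show ?thesis using wi[of j] that(2) by simp
      qed
      have A2: "w $ l0 = 1" using wi[of l0] l0R by simp
      have "{j\<in>E. w $ j \<noteq> 0} = {l0}"
      proof (rule set_eqI)
        fix j
        show "j \<in> {j\<in>E. w $ j \<noteq> 0} \<longleftrightarrow> j \<in> {l0}"
        proof (cases "j = l0")
          case True then show ?thesis using A2 l0E by simp
        next
          case False then show ?thesis using A1[of j] by auto
        qed
      qed
      then show ?thesis using wc by simp
    qed
    then show ?thesis by (intro exI[of _ u]) simp
  qed
  interpret cb: comb B "\<lambda>h j. h $ j" r t s
  proof
    show "finite B" by (rule finB)
    show "card {j. h $ j \<noteq> 0} \<le> r + 1" if "h \<in> B" for h using B(1) that by (auto simp: W_def)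
    show "\<exists>\<mu>. card {j\<in>E. (\<Sum>h\<in>B. \<mu> h * h $ j) \<noteq> 0} = 1" if "E \<noteq> {}" "card E \<le> t" for E
      using Qh that by blast
  qed (use assms(1,2) ts1 ts2 in auto)
  have main: "real n \<le> real (card B) * cb.V" using cb.main nn by simp
  have Dp: "0 < cb.D" by (rule cb.D_pos)
  define X where "X = real r ^ (s+1)"
  have Vd: "cb.V = (cb.D + X) / cb.D" using Dp by (simp add: cb.V_def X_def field_simps)
  have npos: "0 < real n" using nn by (metis of_nat_0_less_iff zero_less_card_finite)
  have Xp: "0 \<le> X" by (simp add: X_def)
  have key: "real k / real n \<le> X / (cb.D + X)"
  proof -
    have "real n * cb.D \<le> real (card B) * (cb.D + X)" using main Vd Dp by (simp add: field_simps)
    moreover have "real k \<le> real n - real (card B)" using cardB by simp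
    ultimately have "real k * (cb.D + X) \<le> (real n - real (card B)) * (cb.D + X)"
      using Dp Xp by (intro mult_right_mono) auto
    also have "\<dots> = real n * (cb.D + X) - real (card B) * (cb.D + X)" by (simp add: algebra_simps)
    also have "\<dots> \<le> real n * X" using \<open>real n * cb.D \<le> real (card B) * (cb.D + X)\<close>
      by (simp add: algebra_simps)
    finally have "real k * (cb.D + X) \<le> real n * X" .
    then show ?thesis using Dp Xp npos by (simp add: field_simps)
  qed
  have Gs: "cb.G (s+1) = (\<Sum>i=0..s. real r ^ i)" unfolding cb.G_def
    by (simp add: atLeast0AtMost lessThan_Suc_atMost)
  have Gs1: "(\<Sum>i=0..s. real r ^ i) = 1 + (\<Sum>i=1..s. real r ^ i)"
    by (simp add: sum.atLeast_Suc_atMost)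
  show ?thesis
  proof (cases "even t")
    case True
    then have "t = 2 * s + 2" using ts1 ts2 by presburger
    then have "cb.D = 2 * (\<Sum>i=0..s. real r ^ i)" unfolding cb.D_def using Gs by simp
    then show ?thesis using key True unfolding s_def[symmetric] Let_def X_def by (simp add: add.commute)
  next
    case False
    then have "t \<noteq> 2 * s + 2" by presburger
    then have "cb.D = 2 * (\<Sum>i=1..s. real r ^ i) + 1" unfolding cb.D_def using Gs Gs1 by simp
    then show ?thesis using key False unfolding s_def[symmetric] Let_def X_def by (simp add: add.commute add.left_commute)
  qed
qed

end
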